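(* Let $q\in\mathbb{C}^*$ with $|q|>1$, let $\rho,\rho'>0$, and let $m$ be a meromorphic function on $\mathbb{C}^*$, $m\not\equiv0$, written as $m(x)=\alpha x^{v}m_0(x)m_\infty(1/x)$ for all $x\in\mathbb{C}^*$, where $\alpha\in\mathbb{C}^*$, $v\in\mathbb{Z}$, and $m_0,m_\infty$ are meromorphic functions on $\mathbb{C}$ without pole at $0$ with $m_0(0)=m_\infty(0)=1$, such that the zeros of $m_0(x)$ (resp. $m_\infty(1/x)$) are exactly the elements of $\mathcal{Z}^*_{m,>\rho}$ (resp. $\mathcal{Z}^*_{m,\leq\rho}$) and the poles of $m_0(x)$ (resp. $m_\infty(1/x)$) are exactly the elements of $\mathcal{P}^*_{m,>\rho'}$ (resp. $\mathcal{P}^*_{m,\leq\rho'}$), all with the same multiplicities as for $m$. Then the equation $y(qx)=m(x)y(x)$ admits a meromorphic solution on $\mathbb{C}^*$ whose zeros and poles are as follows (an order $0$ meaning no zero/pole): Case $v\geq0$: - If $\alpha=1$: zeros at the elements of $q^{\mathbb{Z}}$ with order $2v$, of $aq^{\mathbb{N}^*}$ with order $\mu_{m,a}$ for every $a\in\mathcal{Z}^*_{m,>\rho}$, and of $aq^{-\mathbb{N}}$ with order $\mu_{m,a}$ for every $a\in\mathcal{P}^*_{m,\leq\rho'}$; poles at the elements of $-q^{\mathbb{Z}}$ with order $v$, of $aq^{\mathbb{N}^*}$ with order $\mu_{m,a}$ for every $a\in\mathcal{P}^*_{m,>\rho'}$, and of $aq^{-\mathbb{N}}$ with order $\mu_{m,a}$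 for every $a\in\mathcal{Z}^*_{m,\leq\rho}$. - If $\alpha\neq1$: zeros at the elements of $q^{\mathbb{Z}}$ with order $2v+1$, of $aq^{\mathbb{N}^*}$ with order $\mu_{m,a}$ for every $a\in\mathcal{Z}^*_{m,>\rho}$, and of $aq^{-\mathbb{N}}$ with order $\mu_{m,a}$ for every $a\in\mathcal{P}^*_{m,\leq\rho'}$; poles at the elements of $-q^{\mathbb{Z}}$ with order $v$, of $\alpha q^{\mathbb{Z}}$ with order $1$, of $aq^{\mathbb{N}^*}$ with order $\mu_{m,a}$ for every $a\in\mathcal{P}^*_{m,>\rho'}$, and of $aq^{-\mathbb{N}}$ with order $\mu_{m,a}$ for every $a\in\mathcal{Z}^*_{m,\leq\rho}$. Case $v<0$: - If $\alpha=1$: zeros at the elements of $-q^{\mathbb{Z}}$ with order $-v$, of $aq^{\mathbb{N}^*}$ with order $\mu_{m,a}$ for every $a\in\mathcal{Z}^*_{m,>\rho}$, and of $aq^{-\mathbb{N}}$ with order $\mu_{m,a}$ for every $a\in\mathcal{P}^*_{m,\leq\rho'}$; poles at the elements of $q^{\mathbb{Z}}$ with order $-2v$, of $aq^{\mathbb{N}^*}$ with order $\mu_{m,a}$ for every $a\in\mathcal{P}^*_{m,>\rho'}$, and of $aq^{-\mathbb{N}}$ with order $\mu_{m,a}$ for every $a\in\mathcal{Z}^*_{m,\leq\rho}$. - If $\alpha\neq1$: zeros at the elements of $-q^{\mathbb{Z}}$ with order $-v$, of $aq^{\mathbb{N}^*}$ with order $\mu_{m,a}$ for every $a\in\mathcal{Z}^*_{m,>\rho}$,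 and of $aq^{-\mathbb{N}}$ with order $\mu_{m,a}$ for every $a\in\mathcal{P}^*_{m,\leq\rho'}$; poles at the elements of $q^{\mathbb{Z}}$ with order $-2v-1$, of $\alpha q^{\mathbb{Z}}$ with order $1$, of $aq^{\mathbb{N}^*}$ with order $\mu_{m,a}$ for every $a\in\mathcal{P}^*_{m,>\rho'}$, and of $aq^{-\mathbb{N}}$ with order $\mu_{m,a}$ for every $a\in\mathcal{Z}^*_{m,\leq\rho}$.
   Context: $q^{\mathbb{Z}}=\{q^n:n\in\mathbb{Z}\}$, $-q^{\mathbb{Z}}=\{-q^n:n\in\mathbb{Z}\}$, $\alpha q^{\mathbb{Z}}=\{\alpha q^n:n\in\mathbb{Z}\}$, $aq^{\mathbb{N}^*}=\{aq^n:n\geq1\}$, $aq^{-\mathbb{N}}=\{aq^{-n}:n\geq0\}$. For $\rho>0$: $\mathcal{Z}^*_{m,\leq\rho}$ (resp. $\mathcal{Z}^*_{m,>\rho}$) is the set of zeros $a\neq0$ of $m$ with $|a|\leq\rho$ (resp. $|a|>\rho$), and $\mathcal{P}^*_{m,\leq\rho}$, $\mathcal{P}^*_{m,>\rho}$ are defined similarly for poles. $\mu_{m,a}$ is the order of multiplicity of $a$ as a zero or pole of $m$. *)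

theory Defs
  imports "HOL-Complex_Analysis.Complex_Analysis"
begin

text \<open>The orbit c q^Z = {c q^n : n in Z}; so q^Z = orbit 1 q, -q^Z = orbit (-1) q,
  alpha q^Z = orbit alpha q.\<close>
definition qorbit :: "complex \<Rightarrow> complex \<Rightarrow> complex set" where
  "qorbit c q = {c * q powi n | n. True}"

definition qorbit_pos :: "complex \<Rightarrow> complex \<Rightarrow> complex set" where
  "qorbit_pos a q = {a * q ^ n | n. n \<ge> 1}"

definition qorbit_nonpos :: "complex \<Rightarrow> complex \<Rightarrow> complex set" where
  "qorbit_nonpos a q = {a * q powi (- int n) | n. True}"

definition zeros_star :: "(complex \<Rightarrow> complex) \<Rightarrow> complex set" where
  "zeros_star m = {a. a \<noteq> 0 \<and> zorder m a > 0}"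

definition poles_star :: "(complex \<Rightarrow> complex) \<Rightarrow> complex set" where
  "poles_star m = {a. a \<noteq> 0 \<and> zorder m a < 0}"

definition mult :: "(complex \<Rightarrow> complex) \<Rightarrow> complex \<Rightarrow> int" where
  "mult m a = \<bar>zorder m a\<bar>"

definition Z_le :: "(complex \<Rightarrow> complex) \<Rightarrow> real \<Rightarrow> complex set" where
  "Z_le m \<rho> = {a \<in> zeros_star m. norm a \<le> \<rho>}"
definition Z_gt :: "(complex \<Rightarrow> complex) \<Rightarrow> real \<Rightarrow> complex set" where
  "Z_gt m \<rho> = {a \<in> zeros_star m. norm a > \<rho>}"
definition P_le :: "(complex \<Rightarrow> complex) \<Rightarrow> real \<Rightarrow> complex set" where
  "P_le m \<rho> = {a \<in> poles_star m. norm a \<le> \<rho>}"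
definition P_gt :: "(complex \<Rightarrow> complex) \<Rightarrow> real \<Rightarrow> complex set" where
  "P_gt m \<rho> = {a \<in> poles_star m. norm a > \<rho>}"

definition ind :: "complex set \<Rightarrow> complex \<Rightarrow> int" where
  "ind S x = (if x \<in> S then 1 else 0)"

text \<open>The prescribed divisor of the solution y at x (zero order counted positively,
  pole order negatively; contributions of coinciding points add up).\<close>
definition special_order :: "complex \<Rightarrow> complex \<Rightarrow> int \<Rightarrow> complex \<Rightarrow> int" where
  "special_order q \<alpha> v x =
    (if v \<ge> 0 then
       (if \<alpha> = 1 then 2 * v * ind (qorbit 1 q) x - v * ind (qorbit (-1) q) x
        else (2 * v + 1) * ind (qorbit 1 q) x - v * ind (qorbit (-1) q) x
             - ind (qorbit \<alpha> q) x)
     else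
       (if \<alpha> = 1 then (- v) * ind (qorbit (-1) q) x - (- 2 * v) * ind (qorbit 1 q) x
        else (- v) * ind (qorbit (-1) q) x - (- 2 * v - 1) * ind (qorbit 1 q) x
             - ind (qorbit \<alpha> q) x))"

definition generic_order ::
  "(complex \<Rightarrow> complex) \<Rightarrow> complex \<Rightarrow> real \<Rightarrow> real \<Rightarrow> complex \<Rightarrow> int" where
  "generic_order m q \<rho> \<rho>' x =
      (\<Sum>a\<in>{a \<in> Z_gt m \<rho>. x \<in> qorbit_pos a q}. mult m a)
    + (\<Sum>a\<in>{a \<in> P_le m \<rho>'. x \<in> qorbit_nonpos a q}. mult m a)
    - (\<Sum>a\<in>{a \<in> P_gt m \<rho>'. x \<in> qorbit_pos a q}. mult m a)
    - (\<Sum>a\<in>{a \<in> Z_le m \<rho>. x \<in> qorbit_nonpos a q}. mult m a)"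

end

theory Submission
  imports Defs
begin

lemma analytic_at_0_bound:
  fixes F :: "complex \<Rightarrow> complex"
  assumes "F analytic_on {0}" "F 0 = 1"
  obtains \<delta> C where "\<delta> > 0" "C \<ge> 0" "F holomorphic_on ball 0 \<delta>"
    "\<And>w. norm w < \<delta> \<Longrightarrow> norm (F w - 1) \<le> C * norm w"
    "\<And>w. norm w < \<delta> \<Longrightarrow> norm (F w - 1) \<le> 1/2"
proof -
  obtain e where e: "e > 0" "F holomorphic_on ball 0 e"
    using assms(1) analytic_on_def by auto
  define r where "r = e / 2"
  have r: "r > 0" "cball 0 r \<subseteq> ball 0 e" using e by (auto simp: r_def)
  have hd: "deriv F holomorphic_on ball 0 e"
    by (intro holomorphic_deriv e) auto
  have "continuous_on (cball 0 r) (deriv F)"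
    using hd r by (meson holomorphic_on_imp_continuous_on holomorphic_on_subset)
  hence "compact (deriv F ` cball 0 r)"
    by (intro compact_continuous_image) auto
  hence "bounded (deriv F ` cball 0 r)" by (rule compact_imp_bounded)
  then obtain B where B0': "\<forall>y\<in>deriv F ` cball 0 r. norm y \<le> B"
    unfolding bounded_iff by blast
  hence B: "\<And>z. z \<in> cball 0 r \<Longrightarrow> norm (deriv F z) \<le> B" by blast
  have "norm (deriv F 0) \<le> B" using B r(1) by simp
  hence B0: "B \<ge> 0" by (meson norm_ge_zero order_trans)
  have bnd: "norm (F w - F 0) \<le> B * norm (w - 0)" if "w \<in> cball 0 r" for w
  proof (rule field_differentiable_bound[where S="cball 0 r" and f'="deriv F"])
    fix z :: complex assume z: "z \<in> cball 0 r"
    have "F field_differentiable at z"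
      using e z r by (meson holomorphic_on_imp_differentiable_at open_ball subsetD)
    thus "(F has_field_derivative deriv F z) (at z within cball 0 r)"
      using DERIV_deriv_iff_field_differentiable has_field_derivative_at_within by blast
  qed (use B that r in auto)
  define \<delta> where "\<delta> = min r (1 / (2 * (B + 1)))"
  show ?thesis
  proof
    show "\<delta> > 0" using r B0 by (auto simp: \<delta>_def)
    show "B \<ge> 0" by fact
    show "F holomorphic_on ball 0 \<delta>"
      using e(2) by (rule holomorphic_on_subset) (use r in \<open>auto simp: \<delta>_def\<close>)
    fix w :: complex assume w: "norm w < \<delta>"
    hence "w \<in> cball 0 r" by (auto simp: \<delta>_def)
    thus 1: "norm (F w - 1) \<le> B * norm w" using bnd assms(2) by simp
    have "B * norm w \<le> B * (1 / (2 * (B + 1)))"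
      using w B0 by (intro mult_left_mono) (auto simp: \<delta>_def)
    also have "\<dots> \<le> 1/2" using B0 by (simp add: field_simps)
    finally show "norm (F w - 1) \<le> 1/2" using 1 by linarith
  qed
qed

lemma qpow_small:
  fixes q :: complex
  assumes "norm q > 1" "\<delta> > 0"
  shows "\<exists>N. \<forall>n\<ge>N. R / norm q ^ n < \<delta>"
proof -
  have "(\<lambda>n. R * (1 / norm q) ^ n) \<longlonglongrightarrow> R * 0"
  proof (intro tendsto_mult tendsto_const LIMSEQ_power_zero)
    show "norm (1 / norm q) < 1" using assms by (simp add: divide_less_eq_1)
  qed
  hence "eventually (\<lambda>n. R * (1 / norm q) ^ n < \<delta>) sequentially"
    using assms by (intro order_tendstoD) auto
  thus ?thesis by (auto simp: eventually_sequentially power_one_over field_simps)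
qed

definition qprod :: "complex \<Rightarrow> (complex \<Rightarrow> complex) \<Rightarrow> complex \<Rightarrow> complex" where
  "qprod q F z = (\<Prod>n. F (z / q ^ Suc n))"

locale qprod_loc =
  fixes q :: complex and F :: "complex \<Rightarrow> complex"
  assumes q: "norm q > 1"
  assumes F_mero: "F meromorphic_on UNIV" and F_an: "F analytic_on {0}" and F0: "F 0 = 1"
begin

lemma q0: "q \<noteq> 0" using q by auto

lemma abs_conv_tail:
  "abs_convergent_prod (\<lambda>n. F (z / q ^ Suc (n + k)))"
proof -
  obtain \<delta> C where dc: "\<delta> > 0" "C \<ge> 0" "F holomorphic_on ball 0 \<delta>"
    "\<And>w. norm w < \<delta> \<Longrightarrow> norm (F w - 1) \<le> C * norm w"
    using analytic_at_0_bound[OF F_an F0] by metis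
  obtain N where N: "\<And>n. n \<ge> N \<Longrightarrow> norm z / norm q ^ n < \<delta>"
    using qpow_small[OF q dc(1)] by metis
  show ?thesis unfolding abs_convergent_prod_conv_summable
  proof (rule summable_comparison_test_ev)
    show "eventually (\<lambda>n. norm (norm (F (z / q ^ Suc (n + k)) - 1)) \<le> C * norm z * (1 / norm q) ^ n) sequentially"
      unfolding eventually_sequentially
    proof (intro exI allI impI)
      fix n assume n: "n \<ge> N"
      have lt: "norm (z / q ^ Suc (n + k)) < \<delta>"
      proof -
        have "norm (z / q ^ Suc (n + k)) = norm z / norm q ^ Suc (n + k)"
          by (simp add: norm_divide norm_power norm_mult)
        also have "\<dots> \<le> norm z / norm q ^ n"
          using q by (intro divide_left_mono power_increasing mult_pos_pos zero_less_power) auto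
        also have "\<dots> < \<delta>" using N n by auto
        finally show ?thesis .
      qed
      have "norm (F (z / q ^ Suc (n + k)) - 1) \<le> C * norm (z / q ^ Suc (n + k))"
        using dc(4)[OF lt] .
      also have "\<dots> \<le> C * (norm z * (1 / norm q) ^ n)"
      proof (intro mult_left_mono dc(2))
        have "norm (z / q ^ Suc (n + k)) = norm z / norm q ^ Suc (n + k)"
          by (simp add: norm_divide norm_power norm_mult)
        also have "\<dots> \<le> norm z / norm q ^ n"
          using q by (intro divide_left_mono power_increasing mult_pos_pos zero_less_power) auto
        finally show "norm (z / q ^ Suc (n + k)) \<le> norm z * (1 / norm q) ^ n"
          by (simp add: power_one_over)
      qed
      finally show "norm (norm (F (z / q ^ Suc (n + k)) - 1)) \<le> C * norm z * (1 / norm q) ^ n"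
        by (simp add: mult.assoc)
    qed
    show "summable (\<lambda>n. C * norm z * (1 / norm q) ^ n)"
      using q by (intro summable_mult summable_geometric) (auto simp: divide_less_eq_1)
  qed
qed

lemma conv: "convergent_prod (\<lambda>n. F (z / q ^ Suc n))"
  using abs_conv_tail[of z 0] abs_convergent_prod_imp_convergent_prod by simp

lemma has_prod: "(\<lambda>n. F (z / q ^ Suc n)) has_prod qprod q F z"
  using conv unfolding qprod_def by (rule convergent_prod_has_prod)

lemma functional_eq: "qprod q F (q * z) = F z * qprod q F z"
proof -
  have "(\<lambda>n. F (q * z / q ^ Suc n)) has_prod
          ((\<Prod>k<1. F (q * z / q ^ Suc k)) * (\<Prod>k. F (q * z / q ^ Suc (k + 1))))"
    by (intro has_prod_ignore_initial_segment' conv)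
  moreover have "(\<lambda>k. F (q * z / q ^ Suc (k + 1))) = (\<lambda>k. F (z / q ^ Suc k))"
    using q0 by (auto simp: fun_eq_iff)
  ultimately have "(\<lambda>n. F (q * z / q ^ Suc n)) has_prod (F z * qprod q F z)"
    using q0 by (simp add: qprod_def)
  thus ?thesis using has_prod[of "q * z"] has_prod_unique2 by blast
qed

end


lemma ev_at_div:
  fixes c x :: complex
  assumes "eventually P (at (x / c))" "c \<noteq> 0"
  shows "eventually (\<lambda>z. P (z / c)) (at x)"
proof (rule eventually_compose_filterlim[OF assms(1)])
  show "filterlim (\<lambda>z. z / c) (at (x / c)) (at x)"
  proof (rule filterlim_atI)
    show "\<forall>\<^sub>F z in at x. z / c \<noteq> x / c"
      using eventually_neq_at_within[of x x] by eventually_elim (use assms(2) in auto)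
  qed (use assms(2) in \<open>auto intro!: tendsto_intros\<close>)
qed

lemma nz_cosparse_intro:
  fixes f :: "complex \<Rightarrow> complex"
  assumes "f meromorphic_on A" "open A" "connected A" "z0 \<in> A"
    "eventually (\<lambda>z. f z \<noteq> 0) (at z0)"
  shows "\<forall>\<^sub>\<approx>z\<in>A. f z \<noteq> 0"
proof -
  have "\<not> eventually (\<lambda>z. f z = 0) (cosparse A)"
  proof
    assume "eventually (\<lambda>z. f z = 0) (cosparse A)"
    hence "eventually (\<lambda>z. f z = 0) (at z0)"
      using assms(4) eventually_cosparse_imp_eventually_at by blast
    with assms(5) have "eventually (\<lambda>z. False) (at z0)"
      by eventually_elim auto
    thus False by simp
  qed
  thus ?thesis using meromorphic_imp_constant_or_avoid[OF assms(1-3), of 0] by blast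
qed

lemma analytic_nz_ev:
  fixes f :: "complex \<Rightarrow> complex"
  assumes "f analytic_on {z}" "f z \<noteq> 0"
  shows "eventually (\<lambda>w. f w \<noteq> 0) (at z)"
proof -
  have "isCont f z" by (rule analytic_at_imp_isCont) fact
  thus ?thesis
    using assms(2) isCont_def tendsto_imp_eventually_ne by blast
qed

context qprod_loc
begin

definition "dC = (SOME p. fst p > 0 \<and> snd p \<ge> 0 \<and> F holomorphic_on ball 0 (fst p) \<and>
    (\<forall>w. norm w < fst p \<longrightarrow> norm (F w - 1) \<le> snd p * norm w) \<and>
    (\<forall>w. norm w < fst p \<longrightarrow> norm (F w - 1) \<le> 1/2))"
definition "\<delta>0 = fst dC"
definition "C0 = snd dC"

lemma dC: "\<delta>0 > 0 \<and> C0 \<ge> 0 \<and> F holomorphic_on ball 0 \<delta>0 \<and>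
    (\<forall>w. norm w < \<delta>0 \<longrightarrow> norm (F w - 1) \<le> C0 * norm w) \<and>
    (\<forall>w. norm w < \<delta>0 \<longrightarrow> norm (F w - 1) \<le> 1/2)"
proof -
  obtain \<delta> C where "\<delta> > 0" "C \<ge> 0" "F holomorphic_on ball 0 \<delta>"
    "\<And>w. norm w < \<delta> \<Longrightarrow> norm (F w - 1) \<le> C * norm w"
    "\<And>w. norm w < \<delta> \<Longrightarrow> norm (F w - 1) \<le> 1/2"
    using analytic_at_0_bound[OF F_an F0] by metis
  hence "\<exists>p. fst p > 0 \<and> snd p \<ge> 0 \<and> F holomorphic_on ball 0 (fst p) \<and>
    (\<forall>w. norm w < fst p \<longrightarrow> norm (F w - 1) \<le> snd p * norm w) \<and>
    (\<forall>w. norm w < fst p \<longrightarrow> norm (F w - 1) \<le> 1/2)"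
    by (intro exI[of _ "(\<delta>, C)"]) auto
  from someI_ex[OF this] show ?thesis unfolding \<delta>0_def C0_def dC_def .
qed

lemma delta_pos: "\<delta>0 > 0" using dC by blast
lemma C_nonneg: "C0 \<ge> 0" using dC by blast
lemma F_holo: "F holomorphic_on ball 0 \<delta>0" using dC by blast
lemma F_lip: "norm w < \<delta>0 \<Longrightarrow> norm (F w - 1) \<le> C0 * norm w" using dC by blast
lemma F_half: "norm w < \<delta>0 \<Longrightarrow> norm (F w - 1) \<le> 1/2" using dC by blast
lemma F_nz_small: "norm w < \<delta>0 \<Longrightarrow> F w \<noteq> 0"
  using F_half[of w] by auto
lemma F_an_small: "norm w < \<delta>0 \<Longrightarrow> F analytic_on {w}"
  using F_holo analytic_on_open[of "ball 0 \<delta>0" F] by (meson analytic_on_subset empty_subsetI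
      insert_subset mem_ball_0 open_ball)

lemma F_nz: "\<forall>\<^sub>\<approx>w\<in>UNIV. F w \<noteq> 0"
  by (rule nz_cosparse_intro[OF F_mero _ _ _ analytic_nz_ev[OF F_an]]) (auto simp: F0)

lemma F_freq: "frequently (\<lambda>w. F w \<noteq> 0) (at z)"
  using eventually_cosparse_imp_eventually_at[OF F_nz, of z UNIV]
  by (simp add: eventually_frequently)

lemma F_ev_at: "eventually (\<lambda>w. F w \<noteq> 0) (at z)"
  using eventually_cosparse_imp_eventually_at[OF F_nz, of z UNIV] by simp

definition "T N z = (\<Prod>n. F (z / q ^ Suc (n + N)))"

lemma split: "qprod q F z = (\<Prod>k<N. F (z / q ^ Suc k)) * T N z"
proof -
  have "(\<lambda>n. F (z / q ^ Suc n)) has_prod ((\<Prod>k<N. F (z / q ^ Suc k)) * (\<Prod>k. F (z / q ^ Suc (k + N))))"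
    by (intro has_prod_ignore_initial_segment' conv)
  thus ?thesis using has_prod[of z] has_prod_unique2 unfolding T_def by blast
qed

lemma small_tail:
  assumes "R / norm q ^ Suc N \<le> \<delta>0" "norm z < R"
  shows "norm (z / q ^ Suc (n + N)) < \<delta>0"
proof -
  have "norm (z / q ^ Suc (n + N)) = norm z / norm q ^ Suc (n + N)"
    by (simp add: norm_divide norm_power norm_mult)
  also have "\<dots> \<le> norm z / norm q ^ Suc N"
    using q by (intro divide_left_mono power_increasing mult_pos_pos zero_less_power) auto
  also have "\<dots> < R / norm q ^ Suc N"
    by (intro divide_strict_right_mono zero_less_power) (use q assms(2) in auto)
  finally show ?thesis using assms(1) by linarith
qed

lemma T_nz:
  assumes "R / norm q ^ Suc N \<le> \<delta>0" "norm z < R"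
  shows "T N z \<noteq> 0"
  unfolding T_def
proof (rule prodinf_nonzero)
  show "convergent_prod (\<lambda>n. F (z / q ^ Suc (n + N)))"
    using abs_conv_tail[of z N] abs_convergent_prod_imp_convergent_prod by blast
  show "F (z / q ^ Suc (n + N)) \<noteq> 0" for n
    by (intro F_nz_small small_tail[OF assms])
qed

lemma T_holo:
  assumes "R / norm q ^ Suc N \<le> \<delta>0"
  shows "T N holomorphic_on ball 0 R"
proof (rule holomorphic_uniform_sequence[where f="\<lambda>k z. \<Prod>n<k. F (z / q ^ Suc (n + N))"])
  fix k
  show "(\<lambda>z. \<Prod>n<k. F (z / q ^ Suc (n + N))) holomorphic_on ball 0 R"
  proof (intro holomorphic_on_prod)
    fix n assume "n \<in> {..<k}"
    have "(F \<circ> (\<lambda>z. z / q ^ Suc (n + N))) holomorphic_on ball 0 R"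
    proof (rule holomorphic_on_compose_gen[OF _ F_holo])
      show "(\<lambda>z. z / q ^ Suc (n + N)) holomorphic_on ball 0 R"
        by (intro holomorphic_intros) (use q0 in auto)
      show "(\<lambda>z. z / q ^ Suc (n + N)) ` ball 0 R \<subseteq> ball 0 \<delta>0"
        using small_tail[OF assms] by auto
    qed
    thus "(\<lambda>z. F (z / q ^ Suc (n + N))) holomorphic_on ball 0 R" by (simp add: o_def)
  qed
next
  fix x :: complex assume x: "x \<in> ball 0 R"
  define d where "d = (R - norm x) / 2"
  define R' where "R' = norm x + d"
  have d: "d > 0" using x by (auto simp: d_def)
  have normle: "norm z \<le> R'" if "z \<in> cball x d" for z
  proof -
    have "norm (z - x) \<le> d" using that by (simp add: dist_norm norm_minus_commute)
    moreover have "norm z \<le> norm x + norm (z - x)" by (rule norm_triangle_sub)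
    ultimately show ?thesis unfolding R'_def by linarith
  qed
  have xR: "norm x < R" using x by simp
  have R'R0: "R' < R" unfolding R'_def d_def using xR by (simp add: field_simps)
  have sub: "cball x d \<subseteq> ball 0 R"
  proof
    fix w assume "w \<in> cball x d"
    hence "norm w \<le> R'" by (rule normle)
    thus "w \<in> ball 0 R" using R'R0 by simp
  qed
  have R'R: "R' < R" by (rule R'R0)
  have uc: "uniformly_convergent_on (cball x d) (\<lambda>k z. \<Prod>n<k. F (z / q ^ Suc (n + N)))"
  proof (rule uniformly_convergent_on_prod')
    fix n
    have "(\<lambda>z. F (z / q ^ Suc (n + N))) holomorphic_on ball 0 R"
    proof -
      have "(F \<circ> (\<lambda>z. z / q ^ Suc (n + N))) holomorphic_on ball 0 R"
      proof (rule holomorphic_on_compose_gen[OF _ F_holo])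
        show "(\<lambda>z. z / q ^ Suc (n + N)) holomorphic_on ball 0 R"
          by (intro holomorphic_intros) (use q0 in auto)
        show "(\<lambda>z. z / q ^ Suc (n + N)) ` ball 0 R \<subseteq> ball 0 \<delta>0"
          using small_tail[OF assms] by auto
      qed
      thus ?thesis by (simp add: o_def)
    qed
    thus "continuous_on (cball x d) (\<lambda>z. F (z / q ^ Suc (n + N)))"
      using sub holomorphic_on_imp_continuous_on holomorphic_on_subset by blast
  next
    show "compact (cball x d)" by simp
  next
    show "uniformly_convergent_on (cball x d) (\<lambda>k z. \<Sum>n<k. norm (F (z / q ^ Suc (n + N)) - 1))"
    proof (rule Weierstrass_m_test'_ev)
      show "\<forall>\<^sub>F n in sequentially. \<forall>z\<in>cball x d. norm (norm (F (z / q ^ Suc (n + N)) - 1)) \<le> C0 * R * (1 / norm q) ^ n"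
      proof (intro always_eventually allI ballI)
        fix n z assume z: "z \<in> cball x d"
        have nz: "norm z < R" using normle[OF z] R'R by linarith
        have R0: "0 \<le> R" using nz norm_ge_zero[of z] by linarith
        have "norm (F (z / q ^ Suc (n + N)) - 1) \<le> C0 * norm (z / q ^ Suc (n + N))"
          by (intro F_lip small_tail[OF assms nz])
        also have "\<dots> \<le> C0 * (R * (1 / norm q) ^ n)"
        proof (intro mult_left_mono C_nonneg)
          have "norm (z / q ^ Suc (n + N)) = norm z / norm q ^ Suc (n + N)"
            by (simp add: norm_divide norm_power norm_mult)
          also have "\<dots> \<le> R / norm q ^ n"
            using q nz R0 by (intro frac_le power_increasing mult_pos_pos zero_less_power) auto
          finally show "norm (z / q ^ Suc (n + N)) \<le> R * (1 / norm q) ^ n"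
            by (simp add: power_one_over)
        qed
        finally show "norm (norm (F (z / q ^ Suc (n + N)) - 1)) \<le> C0 * R * (1 / norm q) ^ n"
          by (simp add: mult.assoc)
      qed
      show "summable (\<lambda>n. C0 * R * (1 / norm q) ^ n)"
        using q by (intro summable_mult summable_geometric) (auto simp: divide_less_eq_1)
    qed
  qed
  then obtain g where g: "uniform_limit (cball x d) (\<lambda>k z. \<Prod>n<k. F (z / q ^ Suc (n + N))) g sequentially"
    by (auto simp: uniformly_convergent_on_def)
  also have "?this \<longleftrightarrow> uniform_limit (cball x d) (\<lambda>k z. \<Prod>n<k. F (z / q ^ Suc (n + N))) (T N) sequentially"
  proof (intro uniform_limit_cong)
    fix z :: complex assume zin: "z \<in> cball x d"
    have "(\<lambda>k. \<Prod>n<k. F (z / q ^ Suc (n + N))) \<longlonglongrightarrow> g z"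
      by (rule tendsto_uniform_limitI[OF g zin])
    hence "(\<lambda>k. \<Prod>n<Suc k. F (z / q ^ Suc (n + N))) \<longlonglongrightarrow> g z"
      by (rule LIMSEQ_Suc)
    moreover have "(\<lambda>k. \<Prod>n<Suc k. F (z / q ^ Suc (n + N))) \<longlonglongrightarrow> T N z"
    proof -
      have "convergent_prod (\<lambda>n. F (z / q ^ Suc (n + N)))"
        using abs_conv_tail[of z N] abs_convergent_prod_imp_convergent_prod by blast
      from convergent_prod_LIMSEQ[OF this] show ?thesis
        unfolding lessThan_Suc_atMost T_def .
    qed
    ultimately show "g z = T N z"
      using tendsto_unique by force
  qed auto
  finally show "\<exists>d>0. cball x d \<subseteq> ball 0 R \<and> uniform_limit (cball x d) (\<lambda>k z. \<Prod>n<k. F (z / q ^ Suc (n + N))) (T N) sequentially"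
    using d sub by blast
qed auto

end


context qprod_loc
begin

lemma N_exists: "\<exists>N. R / norm q ^ Suc N \<le> \<delta>0"
proof -
  obtain N where "\<And>n. n \<ge> N \<Longrightarrow> R / norm q ^ n < \<delta>0"
    using qpow_small[OF q delta_pos] by metis
  thus ?thesis by (intro exI[of _ N]) (meson le_SucI less_imp_le order_refl)
qed

lemma factor_mero: "(\<lambda>z. F (z / q ^ Suc k)) meromorphic_on A"
  by (rule meromorphic_on_compose[OF F_mero]) (use q0 in \<open>auto intro!: analytic_intros\<close>)

lemma T_analytic:
  assumes "R / norm q ^ Suc N \<le> \<delta>0" "norm x < R"
  shows "T N analytic_on {x}"
  using T_holo[OF assms(1)] assms(2) analytic_on_open[of "ball 0 R" "T N"]
  by (meson analytic_on_subset empty_subsetI insert_subset mem_ball_0 open_ball)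

lemma T_ev_nz:
  assumes "R / norm q ^ Suc N \<le> \<delta>0" "norm x < R"
  shows "eventually (\<lambda>z. T N z \<noteq> 0) (at x)"
proof -
  have "eventually (\<lambda>z. z \<in> ball 0 R) (at x)"
    by (rule eventually_at_in_open') (use assms in auto)
  thus ?thesis
  proof eventually_elim
    case (elim z)
    thus ?case by (intro T_nz[OF assms(1)]) simp
  qed
qed

lemma qprod_mero: "qprod q F meromorphic_on UNIV"
proof (rule meromorphic_on_meromorphic_at[THEN iffD2], rule ballI)
  fix x :: complex
  obtain N where N: "(norm x + 1) / norm q ^ Suc N \<le> \<delta>0" using N_exists by blast
  have eq: "qprod q F = (\<lambda>z. (\<Prod>k<N. F (z / q ^ Suc k)) * T N z)"
    by (rule ext) (rule split)
  have m1: "(\<lambda>z. \<Prod>k<N. F (z / q ^ Suc k)) meromorphic_on {x}"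
    by (rule meromorphic_on_prod) (rule factor_mero)
  have m2: "T N meromorphic_on {x}"
    by (rule analytic_on_imp_meromorphic_on, rule T_analytic[OF N]) simp
  show "qprod q F meromorphic_on {x}" unfolding eq
    by (rule meromorphic_on_mult[OF m1 m2])
qed

lemma qprod_zorder_N:
  assumes N: "(norm x + 1) / norm q ^ Suc N \<le> \<delta>0"
  shows "zorder (qprod q F) x = (\<Sum>k<N. zorder F (x / q ^ Suc k))"
proof -
  have eq: "qprod q F = (\<lambda>z. (\<Prod>k<N. F (z / q ^ Suc k)) * T N z)"
    by (rule ext) (rule split)
  have evP: "eventually (\<lambda>z. (\<Prod>k<N. F (z / q ^ Suc k)) \<noteq> 0) (at x)"
  proof -
    have "\<forall>k\<in>{..<N}. eventually (\<lambda>z. F (z / q ^ Suc k) \<noteq> 0) (at x)"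
      using ev_at_div[OF F_ev_at] q0 by auto
    hence "eventually (\<lambda>z. \<forall>k\<in>{..<N}. F (z / q ^ Suc k) \<noteq> 0) (at x)"
      by (intro eventually_ball_finite) auto
    thus ?thesis by eventually_elim auto
  qed
  have "zorder (qprod q F) x = zorder (\<lambda>z. \<Prod>k<N. F (z / q ^ Suc k)) x + zorder (T N) x"
    unfolding eq
  proof (rule zorder_mult)
    show "(\<lambda>z. \<Prod>k<N. F (z / q ^ Suc k)) meromorphic_on {x}"
      by (rule meromorphic_on_prod) (rule factor_mero)
    show "\<exists>\<^sub>F z in at x. (\<Prod>k<N. F (z / q ^ Suc k)) \<noteq> 0"
      by (rule eventually_frequently[OF _ evP]) simp
    show "T N meromorphic_on {x}"
      by (rule analytic_on_imp_meromorphic_on, rule T_analytic[OF N]) simp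
    show "\<exists>\<^sub>F z in at x. T N z \<noteq> 0"
      by (rule eventually_frequently[OF _ T_ev_nz[OF N]]) simp_all
  qed
  also have "zorder (T N) x = 0"
    by (rule zorder_eq_0I, rule T_analytic[OF N], simp, rule T_nz[OF N], simp)
  also have "zorder (\<lambda>z. \<Prod>k<N. F (z / q ^ Suc k)) x = (\<Sum>k<N. zorder (\<lambda>z. F (z / q ^ Suc k)) x)"
    by (intro zorder_prod factor_mero evP)
  also have "\<dots> = (\<Sum>k<N. zorder F (x / q ^ Suc k))"
  proof (intro sum.cong refl)
    fix k
    have "zorder (\<lambda>w. F (inverse (q ^ Suc k) * w)) x = zorder F (inverse (q ^ Suc k) * x)"
      by (intro zorder_scale) (use q0 F_mero meromorphic_on_subset in auto)
    thus "zorder (\<lambda>z. F (z / q ^ Suc k)) x = zorder F (x / q ^ Suc k)"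
      by (simp add: divide_inverse_commute)
  qed
  finally show ?thesis by simp
qed

lemma qprod_zorder:
  "finite {n. zorder F (x / q ^ Suc n) \<noteq> 0} \<and>
   zorder (qprod q F) x = (\<Sum>n | zorder F (x / q ^ Suc n) \<noteq> 0. zorder F (x / q ^ Suc n))"
proof -
  obtain N where N: "(norm x + 1) / norm q ^ Suc N \<le> \<delta>0" using N_exists by blast
  have sub: "{n. zorder F (x / q ^ Suc n) \<noteq> 0} \<subseteq> {..<N}"
  proof
    fix n assume n: "n \<in> {n. zorder F (x / q ^ Suc n) \<noteq> 0}"
    show "n \<in> {..<N}"
    proof (rule ccontr)
      assume "n \<notin> {..<N}"
      hence "n = (n - N) + N" by auto
      hence sm: "norm (x / q ^ Suc n) < \<delta>0"
        using small_tail[OF N, of x "n - N"] by simp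
      have "zorder F (x / q ^ Suc n) = 0"
        by (intro zorder_eq_0I F_an_small F_nz_small sm)
      thus False using n by simp
    qed
  qed
  have "zorder (qprod q F) x = (\<Sum>k<N. zorder F (x / q ^ Suc k))"
    by (rule qprod_zorder_N[OF N])
  also have "\<dots> = (\<Sum>n | zorder F (x / q ^ Suc n) \<noteq> 0. zorder F (x / q ^ Suc n))"
    by (rule sum.mono_neutral_right) (use sub in auto)
  finally show ?thesis using sub finite_subset by blast
qed

lemma qprod_nz_small:
  assumes "norm z < \<delta>0 * norm q"
  shows "qprod q F z \<noteq> 0"
proof -
  have "qprod q F z = T 0 z" using split[of z 0] by simp
  moreover have le: "(\<delta>0 * norm q) / norm q ^ Suc 0 \<le> \<delta>0" using q delta_pos by simp
  ultimately show ?thesis using T_nz[OF le assms] by simp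
qed

lemma qprod_an_small:
  assumes "norm z < \<delta>0 * norm q"
  shows "qprod q F analytic_on {z}"
proof -
  have "qprod q F = T 0" using split[of _ 0] by (simp add: fun_eq_iff)
  moreover have le: "(\<delta>0 * norm q) / norm q ^ Suc 0 \<le> \<delta>0" using q delta_pos by simp
  ultimately show ?thesis using T_analytic[OF le assms] by simp
qed

lemma qprod_small_pos: "\<delta>0 * norm q > 0" using delta_pos q by (intro mult_pos_pos) auto

end


lemma connected_punct: "connected (- {0::complex})"
  by (intro path_connected_imp_connected path_connected_punctured_universe) auto

lemma nz_punct:
  fixes f :: "complex \<Rightarrow> complex"
  assumes "f meromorphic_on (- {0})" "z0 \<noteq> 0" "f analytic_on {z0}" "f z0 \<noteq> 0"
  shows "\<forall>\<^sub>\<approx>x\<in>- {0}. f x \<noteq> 0"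
  by (rule nz_cosparse_intro[OF assms(1) _ connected_punct _ analytic_nz_ev[OF assms(3,4)]])
     (use assms(2) in auto)

lemma zorder_inv_compose:
  fixes f :: "complex \<Rightarrow> complex"
  assumes "c \<noteq> 0" "z \<noteq> 0" "f meromorphic_on {c / z}"
  shows "zorder (\<lambda>w. f (c / w)) z = zorder f (c / z)"
proof -
  have flim: "filterlim (\<lambda>w. c / w) (at (c / z)) (at z)"
  proof (rule filterlim_atI)
    show "((\<lambda>w. c / w) \<longlongrightarrow> c / z) (at z)"
      using assms by (auto intro!: tendsto_intros)
    show "\<forall>\<^sub>F w in at z. c / w \<noteq> c / z"
      using eventually_neq_at_within[of z z] by eventually_elim (use assms in \<open>auto simp: field_simps\<close>)
  qed
  show ?thesis
  proof (cases "eventually (\<lambda>w. f w = 0) (at (c / z))")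
    case True
    hence ev: "eventually (\<lambda>w. f (c / w) = 0) (at z)"
      by (rule eventually_compose_filterlim[OF _ flim])
    have "zorder (\<lambda>w. f (c / w)) z = zorder (\<lambda>_. 0) z"
      by (rule zorder_cong) (use ev in auto)
    also have "\<dots> = zorder (\<lambda>_. 0) (c / z)"
      by (simp add: zorder_shift')
    also have "\<dots> = zorder f (c / z)"
      by (rule zorder_cong) (use True in auto)
    finally show ?thesis .
  next
    case False
    have "zorder (f \<circ> (\<lambda>w. c / w)) z = zorder f (c / z) * zorder (\<lambda>x. c / x - c / z) z"
    proof (rule zorder_compose')
      show "isolated_singularity_at f (c / z)" "not_essential f (c / z)"
        using assms(3) by (auto simp: meromorphic_at_iff)
      show "(\<lambda>w. c / w) analytic_on {z}" using assms by (auto intro!: analytic_intros)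
      show "\<forall>\<^sub>F w in at (c / z). f w \<noteq> 0" using False
        by (metis assms(3) has_laurent_expansion_isolated has_laurent_expansion_not_essential
             meromorphic_on_def non_zero_neighbour not_eventually singletonI)
      show "\<forall>\<^sub>F w in at z. c / w \<noteq> c / z"
        using eventually_neq_at_within[of z z] by eventually_elim (use assms in \<open>auto simp: field_simps\<close>)
    qed
    also have "zorder (\<lambda>x. c / x - c / z) z = 1"
    proof (rule zorder_eqI[where S="- {0}" and g="\<lambda>w. - c / (w * z)"])
      show "(\<lambda>w. - c / (w * z)) holomorphic_on - {0}"
        using assms by (auto intro!: holomorphic_intros)
      show "- c / (z * z) \<noteq> 0" using assms by auto
      fix w assume "w \<in> - {0}" "w \<noteq> z"
      thus "c / w - c / z = - c / (w * z) * (w - z) powi 1"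
        using assms by (auto simp: field_simps)
    qed (use assms in auto)
    finally show ?thesis by (simp add: o_def)
  qed
qed

lemma zorder_linear:
  fixes c w :: complex
  assumes "c \<noteq> 0"
  shows "zorder (\<lambda>u. 1 - u / c) w = (if w = c then 1 else 0)"
proof (cases "w = c")
  case True
  have "zorder (\<lambda>u. 1 - u / c) w = 1"
  proof (rule zorder_eqI[where S=UNIV and g="\<lambda>_. - 1 / c"])
    fix u assume "u \<noteq> w"
    show "1 - u / c = - 1 / c * (u - w) powi 1" using True assms by (auto simp: field_simps)
  qed (use assms in auto)
  thus ?thesis using True by simp
next
  case False
  have "zorder (\<lambda>u. 1 - u / c) w = 0"
    by (rule zorder_eq_0I) (use assms False in \<open>auto intro!: analytic_intros simp: field_simps\<close>)
  thus ?thesis using False by simp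
qed

lemma zorder_linear':
  fixes c w :: complex
  assumes "c \<noteq> 0"
  shows "zorder (\<lambda>u. 1 - c * u) w = (if w = 1 / c then 1 else 0)"
proof -
  have "(\<lambda>u. 1 - c * u) = (\<lambda>u. 1 - u / (1 / c))" by (auto simp: fun_eq_iff)
  thus ?thesis using zorder_linear[of "1/c" w] assms by simp
qed

lemma qprod_loc_lin1: "norm q > 1 \<Longrightarrow> c \<noteq> 0 \<Longrightarrow> qprod_loc q (\<lambda>u. 1 - u / c)"
  by unfold_locales (auto intro!: analytic_intros analytic_on_imp_meromorphic_on)

lemma qprod_loc_lin2: "norm q > 1 \<Longrightarrow> qprod_loc q (\<lambda>u. 1 - c * u)"
  by unfold_locales (auto intro!: analytic_intros analytic_on_imp_meromorphic_on)

lemma qpow_inj: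
  fixes q :: complex
  assumes "norm q > 1" "q ^ m = q ^ n"
  shows "m = n"
proof -
  have "norm q ^ m = norm q ^ n" using assms(2) by (metis norm_power)
  thus ?thesis using assms(1) by (metis power_inject_exp)
qed


definition theta :: "complex \<Rightarrow> complex \<Rightarrow> complex \<Rightarrow> complex" where
  "theta q c x = qprod q (\<lambda>u. 1 - u / c) (q * x) * qprod q (\<lambda>u. 1 - c * u) (1 / x)"

locale theta_loc =
  fixes q c :: complex
  assumes q: "norm q > 1" and c: "c \<noteq> 0"
begin

lemma q0: "q \<noteq> 0" using q by auto

sublocale P: qprod_loc q "\<lambda>u. 1 - u / c" by (rule qprod_loc_lin1[OF q c])
sublocale Q: qprod_loc q "\<lambda>u. 1 - c * u" by (rule qprod_loc_lin2[OF q])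

lemma Pc_mero: "(\<lambda>x. qprod q (\<lambda>u. 1 - u / c) (q * x)) meromorphic_on A"
  by (rule meromorphic_on_compose[OF P.qprod_mero]) (auto intro!: analytic_intros)

lemma Qc_mero: "(\<lambda>x. qprod q (\<lambda>u. 1 - c * u) (1 / x)) meromorphic_on (- {0})"
  by (rule meromorphic_on_compose[OF Q.qprod_mero]) (auto intro!: analytic_intros)

lemma th_mero: "theta q c meromorphic_on (- {0})"
  unfolding theta_def[abs_def] by (intro meromorphic_intros Pc_mero Qc_mero)

lemma Pc_nz: "\<forall>\<^sub>\<approx>x\<in>- {0}. qprod q (\<lambda>u. 1 - u / c) (q * x) \<noteq> 0"
proof (rule nz_punct[OF Pc_mero])
  define z0 where "z0 = complex_of_real (P.\<delta>0 / 2)"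
  have n: "norm (q * z0) < P.\<delta>0 * norm q"
    using P.delta_pos q q0 by (simp add: z0_def norm_mult zero_less_mult_iff)
  show "z0 \<noteq> 0" using P.delta_pos by (simp add: z0_def)
  show "qprod q (\<lambda>u. 1 - u / c) (q * z0) \<noteq> 0" by (rule P.qprod_nz_small[OF n])
  have "(\<lambda>x. qprod q (\<lambda>u. 1 - u / c) (q * x)) = qprod q (\<lambda>u. 1 - u / c) \<circ> (\<lambda>x. q * x)"
    by auto
  moreover have "(qprod q (\<lambda>u. 1 - u / c) \<circ> (\<lambda>x. q * x)) analytic_on {z0}"
    by (intro analytic_on_compose analytic_intros) (use P.qprod_an_small[OF n] in auto)
  ultimately show "(\<lambda>x. qprod q (\<lambda>u. 1 - u / c) (q * x)) analytic_on {z0}" by simp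
qed

lemma Qc_nz: "\<forall>\<^sub>\<approx>x\<in>- {0}. qprod q (\<lambda>u. 1 - c * u) (1 / x) \<noteq> 0"
proof (rule nz_punct[OF Qc_mero])
  define z0 where "z0 = complex_of_real (2 / (Q.\<delta>0 * norm q))"
  have pos: "Q.\<delta>0 * norm q > 0" by (rule Q.qprod_small_pos)
  have n: "norm (1 / z0) < Q.\<delta>0 * norm q"
    using pos by (simp add: z0_def norm_divide norm_mult)
  show "z0 \<noteq> 0" using pos Q.delta_pos q0 by (simp add: z0_def)
  show "qprod q (\<lambda>u. 1 - c * u) (1 / z0) \<noteq> 0" by (rule Q.qprod_nz_small[OF n])
  have "(\<lambda>x. qprod q (\<lambda>u. 1 - c * u) (1 / x)) = qprod q (\<lambda>u. 1 - c * u) \<circ> (\<lambda>x. 1 / x)"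
    by auto
  moreover have "(qprod q (\<lambda>u. 1 - c * u) \<circ> (\<lambda>x. 1 / x)) analytic_on {z0}"
    by (intro analytic_on_compose analytic_intros) (use Q.qprod_an_small[OF n] \<open>z0 \<noteq> 0\<close> in auto)
  ultimately show "(\<lambda>x. qprod q (\<lambda>u. 1 - c * u) (1 / x)) analytic_on {z0}" by simp
qed

lemma th_nz: "\<forall>\<^sub>\<approx>x\<in>- {0}. theta q c x \<noteq> 0"
  using Pc_nz Qc_nz by eventually_elim (simp add: theta_def)

lemma th_fe:
  assumes "x \<noteq> 0" "x \<noteq> c / q"
  shows "theta q c (q * x) = - (q / c) * x * theta q c x"
proof -
  have e1: "qprod q (\<lambda>u. 1 - u / c) (q * (q * x)) = (1 - q * x / c) * qprod q (\<lambda>u. 1 - u / c) (q * x)"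
    by (rule P.functional_eq)
  have e2: "qprod q (\<lambda>u. 1 - c * u) (1 / x) = (1 - c / (q * x)) * qprod q (\<lambda>u. 1 - c * u) (1 / (q * x))"
    using Q.functional_eq[of "1 / (q * x)"] q0 by simp
  have ne: "1 - c / (q * x) \<noteq> 0" using assms q0 by (auto simp: field_simps)
  have id: "1 - q * x / c = - (q / c) * x * (1 - c / (q * x))" using assms q0 c by (simp add: field_simps)
  show ?thesis unfolding theta_def e1 e2 id using ne by (simp add: field_simps)
qed

lemma zorder_Pc:
  assumes "x \<noteq> 0"
  shows "zorder (\<lambda>x. qprod q (\<lambda>u. 1 - u / c) (q * x)) x = (if \<exists>n. x = c * q ^ n then 1 else 0)"
proof -
  have "zorder (\<lambda>x. qprod q (\<lambda>u. 1 - u / c) (q * x)) x = zorder (qprod q (\<lambda>u. 1 - u / c)) (q * x)"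
    by (rule zorder_scale) (use P.qprod_mero meromorphic_on_subset q0 in auto)
  also have "\<dots> = (\<Sum>n | zorder (\<lambda>u. 1 - u / c) (q * x / q ^ Suc n) \<noteq> 0. zorder (\<lambda>u. 1 - u / c) (q * x / q ^ Suc n))"
    using P.qprod_zorder by blast
  also have "{n. zorder (\<lambda>u. 1 - u / c) (q * x / q ^ Suc n) \<noteq> 0} = {n. x = c * q ^ n}"
    using zorder_linear[OF c] q0 by (auto simp: field_simps)
  also have "(\<Sum>n\<in>{n. x = c * q ^ n}. zorder (\<lambda>u. 1 - u / c) (q * x / q ^ Suc n)) = (\<Sum>n\<in>{n. x = c * q ^ n}. 1)"
    by (intro sum.cong refl) (use zorder_linear[OF c] q0 in \<open>auto simp: field_simps\<close>)
  also have "\<dots> = (if \<exists>n. x = c * q ^ n then 1 else 0)"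
  proof (cases "\<exists>n. x = c * q ^ n")
    case True
    then obtain n where n: "x = c * q ^ n" by blast
    have "{n. x = c * q ^ n} = {n}" using n c qpow_inj[OF q] by auto
    thus ?thesis using True by simp
  qed auto
  finally show ?thesis .
qed

lemma zorder_Qc:
  assumes "x \<noteq> 0"
  shows "zorder (\<lambda>x. qprod q (\<lambda>u. 1 - c * u) (1 / x)) x = (if \<exists>n. x = c / q ^ Suc n then 1 else 0)"
proof -
  have "zorder (\<lambda>x. qprod q (\<lambda>u. 1 - c * u) (1 / x)) x = zorder (qprod q (\<lambda>u. 1 - c * u)) (1 / x)"
    by (rule zorder_inv_compose) (use Q.qprod_mero meromorphic_on_subset assms in auto)
  also have "\<dots> = (\<Sum>n | zorder (\<lambda>u. 1 - c * u) (1 / x / q ^ Suc n) \<noteq> 0. zorder (\<lambda>u. 1 - c * u) (1 / x / q ^ Suc n))"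
    using Q.qprod_zorder by blast
  also have "{n. zorder (\<lambda>u. 1 - c * u) (1 / x / q ^ Suc n) \<noteq> 0} = {n. x = c / q ^ Suc n}"
    using zorder_linear'[OF c] q0 assms c by (auto simp: field_simps)
  also have "(\<Sum>n\<in>{n. x = c / q ^ Suc n}. zorder (\<lambda>u. 1 - c * u) (1 / x / q ^ Suc n)) = (\<Sum>n\<in>{n. x = c / q ^ Suc n}. 1)"
    by (intro sum.cong refl) (use zorder_linear'[OF c] q0 c in \<open>auto simp: field_simps\<close>)
  also have "\<dots> = (if \<exists>n. x = c / q ^ Suc n then 1 else 0)"
  proof (cases "\<exists>n. x = c / q ^ Suc n")
    case True
    then obtain n where n: "x = c / q ^ Suc n" by blast
    have "m = n" if "c / q ^ Suc n = c / q ^ Suc m" for m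
    proof -
      have "q ^ Suc n = q ^ Suc m" using that c q0 by (simp add: field_simps)
      thus ?thesis using qpow_inj[OF q] by blast
    qed
    hence "{n. x = c / q ^ Suc n} = {n}" using n by auto
    thus ?thesis using True by simp
  qed auto
  finally show ?thesis .
qed

lemma th_zorder:
  assumes "x \<noteq> 0"
  shows "zorder (theta q c) x = (if \<exists>k::int. x = c * q powi k then 1 else 0)"
proof -
  have fr: "frequently (\<lambda>x. f x \<noteq> 0) (at x)" if "\<forall>\<^sub>\<approx>x\<in>- {0}. f x \<noteq> 0" for f :: "complex \<Rightarrow> complex"
    using eventually_cosparse_imp_eventually_at[OF that, of x UNIV] assms
    by (simp add: eventually_frequently)
  have "zorder (theta q c) x = zorder (\<lambda>x. qprod q (\<lambda>u. 1 - u / c) (q * x)) x +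
          zorder (\<lambda>x. qprod q (\<lambda>u. 1 - c * u) (1 / x)) x"
    unfolding theta_def[abs_def]
    by (rule zorder_mult[OF _ fr[OF Pc_nz] _ fr[OF Qc_nz]])
       (use Pc_mero Qc_mero meromorphic_on_subset assms in auto)
  also have "\<dots> = (if \<exists>n. x = c * q ^ n then 1 else 0) + (if \<exists>n. x = c / q ^ Suc n then 1 else 0)"
    using zorder_Pc[OF assms] zorder_Qc[OF assms] by simp
  also have "\<dots> = (if \<exists>k::int. x = c * q powi k then 1 else 0)"
  proof -
    have disj: "\<not> ((\<exists>n. x = c * q ^ n) \<and> (\<exists>n. x = c / q ^ Suc n))"
    proof
      assume "(\<exists>n. x = c * q ^ n) \<and> (\<exists>n. x = c / q ^ Suc n)"
      then obtain n m where "c * q ^ n = c / q ^ Suc m" by metis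
      hence "q ^ (n + Suc m) = q ^ 0" using c q0 by (simp add: field_simps power_add)
      thus False using qpow_inj[OF q] by fastforce
    qed
    have iff: "(\<exists>k::int. x = c * q powi k) \<longleftrightarrow> (\<exists>n. x = c * q ^ n) \<or> (\<exists>n. x = c / q ^ Suc n)"
    proof
      assume "\<exists>k::int. x = c * q powi k"
      then obtain k :: int where k: "x = c * q powi k" by blast
      show "(\<exists>n. x = c * q ^ n) \<or> (\<exists>n. x = c / q ^ Suc n)"
      proof (cases "k \<ge> 0")
        case True
        thus ?thesis using k by (intro disjI1 exI[of _ "nat k"]) (simp add: power_int_def)
      next
        case False
        hence "x = c / q ^ Suc (nat (- k) - 1)" using k
          by (simp add: power_int_def field_simps Suc_diff_1)
        thus ?thesis by blast
      qed
    next
      assume "(\<exists>n. x = c * q ^ n) \<or> (\<exists>n. x = c / q ^ Suc n)"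
      thus "\<exists>k::int. x = c * q powi k"
      proof
        assume "\<exists>n. x = c * q ^ n"
        then obtain n where "x = c * q ^ n" by blast
        thus ?thesis by (intro exI[of _ "int n"]) simp
      next
        assume "\<exists>n. x = c / q ^ Suc n"
        then obtain n where "x = c / q ^ Suc n" by blast
        hence "x = c * q powi (- int (Suc n))"
          unfolding power_int_minus power_int_of_nat by (simp add: field_simps)
        thus ?thesis by blast
      qed
    qed
    show ?thesis using disj iff by auto
  qed
  finally show ?thesis .
qed

end


definition good :: "(complex \<Rightarrow> complex) \<Rightarrow> bool" where
  "good f \<longleftrightarrow> f meromorphic_on (- {0}) \<and> (\<forall>\<^sub>\<approx>x\<in>- {0}. f x \<noteq> 0)"

lemma good_freq:
  assumes "good f" "x \<noteq> 0"
  shows "frequently (\<lambda>z. f z \<noteq> 0) (at x)"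
proof -
  have "eventually (\<lambda>z. f z \<noteq> 0) (at x within UNIV)"
    by (rule eventually_cosparse_imp_eventually_at[of _ "- {0}"]) (use assms in \<open>auto simp: good_def\<close>)
  thus ?thesis by (intro eventually_frequently) simp_all
qed

lemma good_mero_at: "good f \<Longrightarrow> x \<noteq> 0 \<Longrightarrow> f meromorphic_on {x}"
  unfolding good_def by (erule conjE, erule meromorphic_on_subset) auto

lemma good_mult: "good f \<Longrightarrow> good g \<Longrightarrow> good (\<lambda>x. f x * g x)"
  unfolding good_def
proof (elim conjE, intro conjI)
  assume "f meromorphic_on - {0}" "g meromorphic_on - {0}"
  thus "(\<lambda>x. f x * g x) meromorphic_on - {0}" by (rule meromorphic_on_mult)
  assume "\<forall>\<^sub>\<approx>x\<in>- {0}. f x \<noteq> 0" "\<forall>\<^sub>\<approx>x\<in>- {0}. g x \<noteq> 0"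
  thus "\<forall>\<^sub>\<approx>x\<in>- {0}. f x * g x \<noteq> 0" by eventually_elim simp
qed

lemma good_div: "good f \<Longrightarrow> good g \<Longrightarrow> good (\<lambda>x. f x / g x)"
  unfolding good_def
proof (elim conjE, intro conjI)
  assume "f meromorphic_on - {0}" "g meromorphic_on - {0}"
  thus "(\<lambda>x. f x / g x) meromorphic_on - {0}" by (rule meromorphic_on_divide)
  assume "\<forall>\<^sub>\<approx>x\<in>- {0}. f x \<noteq> 0" "\<forall>\<^sub>\<approx>x\<in>- {0}. g x \<noteq> 0"
  thus "\<forall>\<^sub>\<approx>x\<in>- {0}. f x / g x \<noteq> 0" by eventually_elim simp
qed

lemma good_powi: "good f \<Longrightarrow> good (\<lambda>x. f x powi n)"
  unfolding good_def
proof (elim conjE, intro conjI)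
  assume "f meromorphic_on - {0}"
  thus "(\<lambda>x. f x powi n) meromorphic_on - {0}" by (rule meromorphic_on_powi)
  assume "\<forall>\<^sub>\<approx>x\<in>- {0}. f x \<noteq> 0"
  thus "\<forall>\<^sub>\<approx>x\<in>- {0}. f x powi n \<noteq> 0" by eventually_elim simp
qed

lemma good_power: "good f \<Longrightarrow> good (\<lambda>x. f x ^ n)"
  unfolding good_def
proof (elim conjE, intro conjI)
  assume "f meromorphic_on - {0}"
  thus "(\<lambda>x. f x ^ n) meromorphic_on - {0}" by (rule meromorphic_on_power)
  assume "\<forall>\<^sub>\<approx>x\<in>- {0}. f x \<noteq> 0"
  thus "\<forall>\<^sub>\<approx>x\<in>- {0}. f x ^ n \<noteq> 0" by eventually_elim simp
qed

lemma good_id: "good (\<lambda>x. x)"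
  unfolding good_def
proof (intro conjI)
  show "(\<lambda>x. x) meromorphic_on - {0}" by (rule meromorphic_on_id)
  have "eventually (\<lambda>x. x \<in> - {0}) (cosparse (- {0::complex}))"
    by (rule eventually_in_cosparse) auto
  thus "\<forall>\<^sub>\<approx>x\<in>- {0}. (x::complex) \<noteq> 0" by eventually_elim simp
qed

lemma zorder_good_mult:
  "good f \<Longrightarrow> good g \<Longrightarrow> x \<noteq> 0 \<Longrightarrow> zorder (\<lambda>x. f x * g x) x = zorder f x + zorder g x"
  by (rule zorder_mult[OF good_mero_at good_freq good_mero_at good_freq])

lemma zorder_good_div:
  "good f \<Longrightarrow> good g \<Longrightarrow> x \<noteq> 0 \<Longrightarrow> zorder (\<lambda>x. f x / g x) x = zorder f x - zorder g x"
  by (rule zorder_divide[OF good_mero_at good_freq good_mero_at good_freq])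

lemma zorder_good_powi:
  "good f \<Longrightarrow> x \<noteq> 0 \<Longrightarrow> zorder (\<lambda>x. f x powi n) x = n * zorder f x"
  by (rule zorder_power_int[OF good_mero_at good_freq])

lemma zorder_good_power:
  "good f \<Longrightarrow> x \<noteq> 0 \<Longrightarrow> zorder (\<lambda>x. f x ^ n) x = int n * zorder f x"
  by (rule zorder_power[OF good_mero_at good_freq])

lemma zorder_id_nz: "(x::complex) \<noteq> 0 \<Longrightarrow> zorder (\<lambda>x. x) x = 0"
  by (rule zorder_eq_0I) (auto intro: analytic_on_id)

lemma good_theta: "norm q > 1 \<Longrightarrow> c \<noteq> 0 \<Longrightarrow> good (theta q c)"
proof -
  assume "norm q > 1" "c \<noteq> 0"
  then interpret theta_loc q c by unfold_locales
  show ?thesis unfolding good_def using th_mero th_nz by blast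
qed

lemma zorder_theta:
  "norm q > 1 \<Longrightarrow> c \<noteq> 0 \<Longrightarrow> x \<noteq> 0 \<Longrightarrow> zorder (theta q c) x = ind (qorbit c q) x"
proof -
  assume "norm q > 1" "c \<noteq> 0" "x \<noteq> 0"
  then interpret theta_loc q c by unfold_locales
  show ?thesis using th_zorder[OF \<open>x \<noteq> 0\<close>] by (simp add: ind_def qorbit_def)
qed

lemma book:
  fixes h :: "nat \<Rightarrow> complex" and f :: "complex \<Rightarrow> int" and mu :: "complex \<Rightarrow> int"
  assumes inj: "inj h" and fin: "finite {n. f (h n) \<noteq> 0}"
    and R: "\<And>a. R a \<longleftrightarrow> (\<exists>n. a = h n)"
    and hnz: "\<And>n. h n \<noteq> 0"
    and Zs: "\<And>a. a \<noteq> 0 \<Longrightarrow> f a > 0 \<longleftrightarrow> a \<in> Zs"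
    and Ps: "\<And>a. a \<noteq> 0 \<Longrightarrow> f a < 0 \<longleftrightarrow> a \<in> Ps"
    and mu: "\<And>a. a \<in> Zs \<union> Ps \<Longrightarrow> mu a = \<bar>f a\<bar>"
    and Z0: "0 \<notin> Zs" "0 \<notin> Ps"
  shows "(\<Sum>a\<in>{a\<in>Zs. R a}. mu a) - (\<Sum>a\<in>{a\<in>Ps. R a}. mu a) = (\<Sum>n | f (h n) \<noteq> 0. f (h n))"
proof -
  have e1: "{a\<in>Zs. R a} = h ` {n. f (h n) > 0}"
  proof (intro equalityI subsetI)
    fix a assume a: "a \<in> {a\<in>Zs. R a}"
    then obtain n where n: "a = h n" using R by auto
    have "a \<noteq> 0" using a Z0 by auto
    hence "f a > 0" using a Zs by auto
    thus "a \<in> h ` {n. f (h n) > 0}" using n by auto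
  next
    fix a assume "a \<in> h ` {n. f (h n) > 0}"
    then obtain n where n: "a = h n" "f (h n) > 0" by auto
    thus "a \<in> {a\<in>Zs. R a}" using Zs[OF hnz[of n]] R by auto
  qed
  have e2: "{a\<in>Ps. R a} = h ` {n. f (h n) < 0}"
  proof (intro equalityI subsetI)
    fix a assume a: "a \<in> {a\<in>Ps. R a}"
    then obtain n where n: "a = h n" using R by auto
    have "a \<noteq> 0" using a Z0 by auto
    hence "f a < 0" using a Ps by auto
    thus "a \<in> h ` {n. f (h n) < 0}" using n by auto
  next
    fix a assume "a \<in> h ` {n. f (h n) < 0}"
    then obtain n where n: "a = h n" "f (h n) < 0" by auto
    thus "a \<in> {a\<in>Ps. R a}" using Ps[OF hnz[of n]] R by auto
  qed
  have injon: "inj_on h A" for A using inj by (rule inj_on_subset) auto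
  have s1: "(\<Sum>a\<in>{a\<in>Zs. R a}. mu a) = (\<Sum>n | f (h n) > 0. f (h n))"
  proof -
    have "(\<Sum>a\<in>{a\<in>Zs. R a}. mu a) = (\<Sum>n | f (h n) > 0. mu (h n))"
      unfolding e1 by (rule sum.reindex[OF injon, unfolded o_def])
    also have "\<dots> = (\<Sum>n | f (h n) > 0. f (h n))"
    proof (intro sum.cong refl)
      fix n assume "n \<in> {n. f (h n) > 0}"
      hence "f (h n) > 0" by simp
      moreover have "h n \<in> Zs" using Zs[OF hnz[of n]] calculation by simp
      ultimately show "mu (h n) = f (h n)" using mu[of "h n"] by simp
    qed
    finally show ?thesis .
  qed
  have s2: "(\<Sum>a\<in>{a\<in>Ps. R a}. mu a) = (\<Sum>n | f (h n) < 0. - f (h n))"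
  proof -
    have "(\<Sum>a\<in>{a\<in>Ps. R a}. mu a) = (\<Sum>n | f (h n) < 0. mu (h n))"
      unfolding e2 by (rule sum.reindex[OF injon, unfolded o_def])
    also have "\<dots> = (\<Sum>n | f (h n) < 0. - f (h n))"
    proof (intro sum.cong refl)
      fix n assume "n \<in> {n. f (h n) < 0}"
      hence "f (h n) < 0" by simp
      moreover have "h n \<in> Ps" using Ps[OF hnz[of n]] calculation by simp
      ultimately show "mu (h n) = - f (h n)" using mu[of "h n"] by simp
    qed
    finally show ?thesis .
  qed
  have un: "{n. f (h n) \<noteq> 0} = {n. f (h n) > 0} \<union> {n. f (h n) < 0}" by auto
  have fin1: "finite {n. f (h n) > 0}" by (rule finite_subset[OF _ fin]) auto
  have fin2: "finite {n. f (h n) < 0}" by (rule finite_subset[OF _ fin]) auto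
  have "(\<Sum>n | f (h n) \<noteq> 0. f (h n)) = (\<Sum>n | f (h n) > 0. f (h n)) + (\<Sum>n | f (h n) < 0. f (h n))"
    unfolding un by (rule sum.union_disjoint[OF fin1 fin2]) auto
  also have "(\<Sum>n | f (h n) < 0. f (h n)) = - (\<Sum>n | f (h n) < 0. - f (h n))"
    by (simp add: sum_negf)
  finally show ?thesis unfolding s1 s2 by simp
qed


lemma good_qprod: assumes "qprod_loc q F" shows "good (qprod q F)"
proof -
  interpret qprod_loc q F by fact
  have "(qprod q F) meromorphic_on (- {0})" by (rule meromorphic_on_subset[OF qprod_mero]) auto
  moreover have "\<forall>\<^sub>\<approx>x\<in>- {0}. qprod q F x \<noteq> 0"
  proof (rule nz_punct)
    show "qprod q F meromorphic_on (- {0})" by (rule meromorphic_on_subset[OF qprod_mero]) auto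
    define z0 where "z0 = complex_of_real \<delta>0"
    have n: "norm z0 < \<delta>0 * norm q"
      using delta_pos q by (simp add: z0_def)
    show "z0 \<noteq> 0" using delta_pos by (simp add: z0_def)
    show "qprod q F analytic_on {z0}" by (rule qprod_an_small[OF n])
    show "qprod q F z0 \<noteq> 0" by (rule qprod_nz_small[OF n])
  qed
  ultimately show ?thesis by (simp add: good_def)
qed

lemma good_qprod_inv: assumes "qprod_loc q F" shows "good (\<lambda>x. qprod q F (q / x))"
proof -
  interpret qprod_loc q F by fact
  have mer: "(\<lambda>x. qprod q F (q / x)) meromorphic_on (- {0})"
    by (rule meromorphic_on_compose[OF qprod_mero]) (auto intro!: analytic_intros)
  moreover have "\<forall>\<^sub>\<approx>x\<in>- {0}. qprod q F (q / x) \<noteq> 0"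
  proof (rule nz_punct[OF mer])
    define z0 where "z0 = complex_of_real (2 / \<delta>0)"
    have z0: "z0 \<noteq> 0" using delta_pos by (simp add: z0_def)
    have n: "norm (q / z0) < \<delta>0 * norm q"
      using delta_pos q q0 by (simp add: z0_def norm_divide norm_mult)
    show "z0 \<noteq> 0" by fact
    have "(qprod q F \<circ> (\<lambda>x. q / x)) analytic_on {z0}"
      by (intro analytic_on_compose analytic_intros) (use qprod_an_small[OF n] z0 in auto)
    thus "(\<lambda>x. qprod q F (q / x)) analytic_on {z0}" by (simp add: o_def)
    show "qprod q F (q / z0) \<noteq> 0" by (rule qprod_nz_small[OF n])
  qed
  ultimately show ?thesis by (simp add: good_def)
qed

lemma zorder_qprod_inv:
  assumes "qprod_loc q F" "x \<noteq> 0"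
  shows "finite {n. zorder (\<lambda>w. F (1 / w)) (x * q ^ n) \<noteq> 0} \<and>
         zorder (\<lambda>x. qprod q F (q / x)) x =
           (\<Sum>n | zorder (\<lambda>w. F (1 / w)) (x * q ^ n) \<noteq> 0. zorder (\<lambda>w. F (1 / w)) (x * q ^ n))"
proof -
  interpret qprod_loc q F by fact
  have eqf: "zorder F (q / x / q ^ Suc n) = zorder (\<lambda>w. F (1 / w)) (x * q ^ n)" for n
  proof -
    have "zorder (\<lambda>w. F (1 / w)) (x * q ^ n) = zorder F (1 / (x * q ^ n))"
      by (rule zorder_inv_compose) (use assms(2) q0 F_mero meromorphic_on_subset in auto)
    moreover have "1 / (x * q ^ n) = q / x / q ^ Suc n" using q0 assms(2) by (simp add: field_simps)
    ultimately show ?thesis by simp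
  qed
  have "zorder (\<lambda>x. qprod q F (q / x)) x = zorder (qprod q F) (q / x)"
    by (rule zorder_inv_compose) (use assms(2) q0 qprod_mero meromorphic_on_subset in auto)
  thus ?thesis using qprod_zorder[of "q / x"] unfolding eqf by simp
qed


theorem corollary2p11:
  fixes q \<alpha> :: complex and \<rho> \<rho>' :: real and v :: int
    and m m0 minf :: "complex \<Rightarrow> complex"
  assumes hq: "norm q > 1"
    and hrho: "\<rho> > 0" and hrho': "\<rho>' > 0"
    and hm: "m meromorphic_on (- {0})"
    and hm_nz: "\<not> (\<forall>\<^sub>\<approx>x\<in>- {0}. m x = 0)"
    and halpha: "\<alpha> \<noteq> 0"
    and hm0: "m0 meromorphic_on UNIV" and hm0_0: "m0 analytic_on {0}" and hm0_1: "m0 0 = 1"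
    and hminf: "minf meromorphic_on UNIV" and hminf_0: "minf analytic_on {0}"
    and hminf_1: "minf 0 = 1"
    and hfact: "\<forall>\<^sub>\<approx>x\<in>- {0}. m x = \<alpha> * x powi v * m0 x * minf (1 / x)"
    and hm0_div: "\<forall>z. z \<noteq> 0 \<longrightarrow>
        (zorder m0 z > 0 \<longleftrightarrow> z \<in> Z_gt m \<rho>) \<and>
        (zorder m0 z < 0 \<longleftrightarrow> z \<in> P_gt m \<rho>') \<and>
        (z \<in> Z_gt m \<rho> \<union> P_gt m \<rho>' \<longrightarrow> zorder m0 z = zorder m z)"
    and hminf_div: "\<forall>z. z \<noteq> 0 \<longrightarrow>
        (zorder (\<lambda>x. minf (1 / x)) z > 0 \<longleftrightarrow> z \<in> Z_le m \<rho>) \<and>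
        (zorder (\<lambda>x. minf (1 / x)) z < 0 \<longleftrightarrow> z \<in> P_le m \<rho>') \<and>
        (z \<in> Z_le m \<rho> \<union> P_le m \<rho>' \<longrightarrow> zorder (\<lambda>x. minf (1 / x)) z = zorder m z)"
  shows "\<exists>y. y meromorphic_on (- {0})
           \<and> \<not> (\<forall>\<^sub>\<approx>x\<in>- {0}. y x = 0)
           \<and> (\<forall>\<^sub>\<approx>x\<in>- {0}. y (q * x) = m x * y x)
           \<and> (\<forall>x. x \<noteq> 0 \<longrightarrow>
                zorder y x = special_order q \<alpha> v x + generic_order m q \<rho> \<rho>' x)"
proof -
  have q0: "q \<noteq> 0" using hq by auto
  interpret Y: qprod_loc q m0 by unfold_locales (use hq hm0 hm0_0 hm0_1 in auto)
  interpret W: qprod_loc q minf by unfold_locales (use hq hminf hminf_0 hminf_1 in auto)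
  have tl1: "theta_loc q 1" by unfold_locales (use hq in auto)
  have tlm: "theta_loc q (-1)" by unfold_locales (use hq in auto)
  have tla: "theta_loc q \<alpha>" by unfold_locales (use hq halpha in auto)
  define B where "B = (\<lambda>x. theta q 1 x ^ 2 / (x * theta q (-1) x))"
  define E where "E = (\<lambda>x. theta q 1 x / theta q \<alpha> x)"
  define Yf where "Yf = qprod q m0"
  define Wf where "Wf = (\<lambda>x. qprod q minf (q / x))"
  define y where "y = (\<lambda>x. B x powi v * E x * Yf x / Wf x)"
  have g1: "good (theta q 1)" by (rule good_theta) (use hq in auto)
  have gm: "good (theta q (-1))" by (rule good_theta) (use hq in auto)
  have ga: "good (theta q \<alpha>)" by (rule good_theta) (use hq halpha in auto)
  have gsq: "good (\<lambda>x. theta q 1 x ^ 2)" by (rule good_power[OF g1])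
  have gxm: "good (\<lambda>x. x * theta q (-1) x)" by (rule good_mult[OF good_id gm])
  have gB: "good B" unfolding B_def by (rule good_div[OF gsq gxm])
  have gE: "good E" unfolding E_def by (rule good_div[OF g1 ga])
  have gY: "good Yf" unfolding Yf_def by (rule good_qprod) unfold_locales
  have gW: "good Wf" unfolding Wf_def by (rule good_qprod_inv) unfold_locales
  have gBv: "good (\<lambda>x. B x powi v)" by (rule good_powi[OF gB])
  have gBE: "good (\<lambda>x. B x powi v * E x)" by (rule good_mult[OF gBv gE])
  have gBEY: "good (\<lambda>x. B x powi v * E x * Yf x)" by (rule good_mult[OF gBE gY])
  have gy: "good y" unfolding y_def by (rule good_div[OF gBEY gW])

  have fe_point: "y (q * x) = m x * y x"
    if x0: "x \<noteq> 0" and x1: "x \<noteq> 1 / q" and xm: "x \<noteq> (-1) / q" and xa: "x \<noteq> \<alpha> / q"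
      and Wx: "Wf x \<noteq> 0" and tmx: "theta q (-1) x \<noteq> 0" and tax: "theta q \<alpha> x \<noteq> 0"
      and mx: "m x = \<alpha> * x powi v * m0 x * minf (1 / x)" for x
  proof -
    have t1: "theta q 1 (q * x) = - (q / 1) * x * theta q 1 x"
      by (rule theta_loc.th_fe[OF tl1 x0 x1])
    have t2: "theta q (-1) (q * x) = - (q / (-1)) * x * theta q (-1) x"
      by (rule theta_loc.th_fe[OF tlm x0 xm])
    have t3: "theta q \<alpha> (q * x) = - (q / \<alpha>) * x * theta q \<alpha> x"
      by (rule theta_loc.th_fe[OF tla x0 xa])
    have hY: "Yf (q * x) = m0 x * Yf x" unfolding Yf_def by (rule Y.functional_eq)
    have hW: "Wf x = minf (1 / x) * Wf (q * x)"
    proof -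
      have "Wf x = qprod q minf (q * (1 / x))" by (simp add: Wf_def)
      also have "\<dots> = minf (1 / x) * qprod q minf (1 / x)" by (rule W.functional_eq)
      also have "qprod q minf (1 / x) = Wf (q * x)" using q0 x0 by (simp add: Wf_def)
      finally show ?thesis .
    qed
    have mi: "minf (1 / x) \<noteq> 0" using hW Wx by auto
    have hW': "Wf (q * x) = Wf x / minf (1 / x)" using hW mi by (simp add: field_simps)
    have hB: "B (q * x) = x * B x"
      unfolding B_def t1 t2 using q0 x0 tmx by (simp add: field_simps power2_eq_square)
    have hE: "E (q * x) = \<alpha> * E x"
      unfolding E_def t1 t3 using q0 x0 tax halpha by (simp add: field_simps)
    have "y (q * x) = (x * B x) powi v * (\<alpha> * E x) * (m0 x * Yf x) / (Wf x / minf (1 / x))"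
      unfolding y_def hB hE hY hW' by simp
    also have "\<dots> = x powi v * B x powi v * (\<alpha> * E x) * (m0 x * Yf x) / (Wf x / minf (1 / x))"
      by (simp add: power_int_mult_distrib)
    also have "\<dots> = m x * y x"
      unfolding mx y_def using Wx mi by (simp add: field_simps)
    finally show ?thesis .
  qed

  have zo: "zorder y x = special_order q \<alpha> v x + generic_order m q \<rho> \<rho>' x" if x0: "x \<noteq> 0" for x
  proof -
    define i1 where "i1 = ind (qorbit 1 q) x"
    define im where "im = ind (qorbit (-1) q) x"
    define ia where "ia = ind (qorbit \<alpha> q) x"
    have z1: "zorder (theta q 1) x = i1" unfolding i1_def by (rule zorder_theta) (use hq x0 in auto)
    have zm: "zorder (theta q (-1)) x = im" unfolding im_def by (rule zorder_theta) (use hq x0 in auto)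
    have za: "zorder (theta q \<alpha>) x = ia" unfolding ia_def by (rule zorder_theta) (use hq x0 halpha in auto)
    have zB: "zorder B x = 2 * i1 - im"
    proof -
      have "zorder B x = zorder (\<lambda>x. theta q 1 x ^ 2) x - zorder (\<lambda>x. x * theta q (-1) x) x"
        unfolding B_def by (rule zorder_good_div[OF gsq gxm x0])
      also have "zorder (\<lambda>x. theta q 1 x ^ 2) x = int 2 * zorder (theta q 1) x"
        by (rule zorder_good_power[OF g1 x0])
      also have "zorder (\<lambda>x. x * theta q (-1) x) x = zorder (\<lambda>x. x) x + zorder (theta q (-1)) x"
        by (rule zorder_good_mult[OF good_id gm x0])
      finally show ?thesis using z1 zm zorder_id_nz[OF x0] by simp
    qed
    have zE: "zorder E x = i1 - ia"
      unfolding E_def using zorder_good_div[OF g1 ga x0] z1 za by simp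
    define SY where "SY = (\<Sum>n | zorder m0 (x / q ^ Suc n) \<noteq> 0. zorder m0 (x / q ^ Suc n))"
    define SW where "SW = (\<Sum>n | zorder (\<lambda>w. minf (1 / w)) (x * q ^ n) \<noteq> 0. zorder (\<lambda>w. minf (1 / w)) (x * q ^ n))"
    have finY: "finite {n. zorder m0 (x / q ^ Suc n) \<noteq> 0}" and zY: "zorder Yf x = SY"
      using Y.qprod_zorder[of x] unfolding SY_def Yf_def by auto
    have finW: "finite {n. zorder (\<lambda>w. minf (1 / w)) (x * q ^ n) \<noteq> 0}" and zW: "zorder Wf x = SW"
      using zorder_qprod_inv[of q minf x] x0 unfolding SW_def Wf_def by (auto intro: W.qprod_loc_axioms)
    have zy: "zorder y x = v * (2 * i1 - im) + (i1 - ia) + SY - SW"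
    proof -
      have "zorder y x = zorder (\<lambda>x. B x powi v * E x * Yf x) x - zorder Wf x"
        unfolding y_def by (rule zorder_good_div[OF gBEY gW x0])
      also have "zorder (\<lambda>x. B x powi v * E x * Yf x) x = zorder (\<lambda>x. B x powi v * E x) x + zorder Yf x"
        by (rule zorder_good_mult[OF gBE gY x0])
      also have "zorder (\<lambda>x. B x powi v * E x) x = zorder (\<lambda>x. B x powi v) x + zorder E x"
        by (rule zorder_good_mult[OF gBv gE x0])
      also have "zorder (\<lambda>x. B x powi v) x = v * zorder B x"
        by (rule zorder_good_powi[OF gB x0])
      finally show ?thesis using zB zE zY zW by simp
    qed
    have book1: "(\<Sum>a\<in>{a \<in> Z_gt m \<rho>. x \<in> qorbit_pos a q}. mult m a)
                 - (\<Sum>a\<in>{a \<in> P_gt m \<rho>'. x \<in> qorbit_pos a q}. mult m a) = SY"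
      unfolding SY_def
    proof (rule book[where h="\<lambda>n. x / q ^ Suc n" and f="zorder m0"])
      show "inj (\<lambda>n. x / q ^ Suc n)"
      proof (rule injI)
        fix n n' assume "x / q ^ Suc n = x / q ^ Suc n'"
        hence "q ^ Suc n = q ^ Suc n'" using x0 q0 by (simp add: field_simps)
        thus "n = n'" using qpow_inj[OF hq] by blast
      qed
      show "finite {n. zorder m0 (x / q ^ Suc n) \<noteq> 0}" by (rule finY)
      fix a
      show "x \<in> qorbit_pos a q \<longleftrightarrow> (\<exists>n. a = x / q ^ Suc n)"
      proof
        assume "x \<in> qorbit_pos a q"
        then obtain k where k: "x = a * q ^ k" "k \<ge> 1" unfolding qorbit_pos_def by blast
        hence "a = x / q ^ Suc (k - 1)" using q0 by (simp add: field_simps)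
        thus "\<exists>n. a = x / q ^ Suc n" by blast
      next
        assume "\<exists>n. a = x / q ^ Suc n"
        then obtain n where n: "a = x / q ^ Suc n" by blast
        hence "x = a * q ^ Suc n" using q0 by (simp add: field_simps)
        hence "\<exists>k. x = a * q ^ k \<and> k \<ge> 1" by (intro exI[of _ "Suc n"]) simp
        thus "x \<in> qorbit_pos a q" unfolding qorbit_pos_def by simp
      qed
    next
      fix n show "x / q ^ Suc n \<noteq> 0" using x0 q0 by simp
    next
      fix a :: complex assume "a \<noteq> 0"
      thus "zorder m0 a > 0 \<longleftrightarrow> a \<in> Z_gt m \<rho>" "zorder m0 a < 0 \<longleftrightarrow> a \<in> P_gt m \<rho>'"
        using hm0_div by auto
    next
      fix a assume a: "a \<in> Z_gt m \<rho> \<union> P_gt m \<rho>'"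
      have a0: "a \<noteq> 0" using a by (auto simp: Z_gt_def P_gt_def zeros_star_def poles_star_def)
      have "zorder m0 a = zorder m a" using hm0_div[rule_format, OF a0] a by blast
      thus "mult m a = \<bar>zorder m0 a\<bar>" by (simp add: mult_def)
    next
      show "0 \<notin> Z_gt m \<rho>" "0 \<notin> P_gt m \<rho>'" by (auto simp: Z_gt_def P_gt_def zeros_star_def poles_star_def)
    qed
    have book2: "(\<Sum>a\<in>{a \<in> Z_le m \<rho>. x \<in> qorbit_nonpos a q}. mult m a)
                 - (\<Sum>a\<in>{a \<in> P_le m \<rho>'. x \<in> qorbit_nonpos a q}. mult m a) = SW"
      unfolding SW_def
    proof (rule book[where h="\<lambda>n. x * q ^ n" and f="zorder (\<lambda>w. minf (1 / w))"])
      show "inj (\<lambda>n. x * q ^ n)"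
      proof (rule injI)
        fix n n' assume "x * q ^ n = x * q ^ n'"
        hence "q ^ n = q ^ n'" using x0 by simp
        thus "n = n'" using qpow_inj[OF hq] by blast
      qed
      show "finite {n. zorder (\<lambda>w. minf (1 / w)) (x * q ^ n) \<noteq> 0}" by (rule finW)
      fix a
      show "x \<in> qorbit_nonpos a q \<longleftrightarrow> (\<exists>n. a = x * q ^ n)"
      proof
        assume "x \<in> qorbit_nonpos a q"
        then obtain k where k: "x = a * q powi (- int k)" unfolding qorbit_nonpos_def by blast
        hence "x = a / q ^ k" unfolding power_int_minus power_int_of_nat by (simp add: field_simps)
        hence "a = x * q ^ k" using q0 by (simp add: field_simps)
        thus "\<exists>n. a = x * q ^ n" by blast
      next
        assume "\<exists>n. a = x * q ^ n"
        then obtain n where n: "a = x * q ^ n" by blast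
        hence "x = a * q powi (- int n)" unfolding power_int_minus power_int_of_nat
          using q0 by (simp add: field_simps)
        hence "\<exists>k. x = a * q powi (- int k)" by (intro exI[of _ n])
        thus "x \<in> qorbit_nonpos a q" unfolding qorbit_nonpos_def by simp
      qed
    next
      fix n show "x * q ^ n \<noteq> 0" using x0 q0 by simp
    next
      fix a :: complex assume "a \<noteq> 0"
      thus "zorder (\<lambda>w. minf (1 / w)) a > 0 \<longleftrightarrow> a \<in> Z_le m \<rho>"
           "zorder (\<lambda>w. minf (1 / w)) a < 0 \<longleftrightarrow> a \<in> P_le m \<rho>'"
        using hminf_div by auto
    next
      fix a assume a: "a \<in> Z_le m \<rho> \<union> P_le m \<rho>'"
      have a0: "a \<noteq> 0" using a by (auto simp: Z_le_def P_le_def zeros_star_def poles_star_def)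
      have "zorder (\<lambda>w. minf (1 / w)) a = zorder m a" using hminf_div[rule_format, OF a0] a by blast
      thus "mult m a = \<bar>zorder (\<lambda>w. minf (1 / w)) a\<bar>" by (simp add: mult_def)
    next
      show "0 \<notin> Z_le m \<rho>" "0 \<notin> P_le m \<rho>'" by (auto simp: Z_le_def P_le_def zeros_star_def poles_star_def)
    qed
    have gen: "generic_order m q \<rho> \<rho>' x = SY - SW"
      using book1 book2 unfolding generic_order_def by linarith
    have spec: "special_order q \<alpha> v x = v * (2 * i1 - im) + (i1 - ia)"
    proof (cases "\<alpha> = 1")
      case True
      hence "ia = i1" by (simp add: ia_def i1_def)
      thus ?thesis using True unfolding special_order_def i1_def [symmetric] im_def [symmetric]
        by (simp add: algebra_simps)
    next
      case False
      thus ?thesis unfolding special_order_def i1_def [symmetric] im_def [symmetric] ia_def [symmetric]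
        by (simp add: algebra_simps)
    qed
    show ?thesis using zy gen spec by simp
  qed

  show ?thesis
  proof (intro exI[of _ y] conjI allI impI)
    show "y meromorphic_on (- {0})" using gy by (simp add: good_def)
    show "\<not> (\<forall>\<^sub>\<approx>x\<in>- {0}. y x = 0)"
    proof
      assume a: "\<forall>\<^sub>\<approx>x\<in>- {0}. y x = 0"
      have b: "\<forall>\<^sub>\<approx>x\<in>- {0}. y x \<noteq> 0" using gy by (simp add: good_def)
      from a b have "\<forall>\<^sub>\<approx>x\<in>- {0::complex}. False" by eventually_elim simp
      hence "- {0::complex} = {}" by (simp add: eventually_False)
      moreover have "(1::complex) \<in> - {0}" by simp
      ultimately show False by blast
    qed
    have e0: "\<forall>\<^sub>\<approx>x\<in>- {0}. x \<in> - {0::complex}" by (rule eventually_in_cosparse) auto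
    have e1: "\<forall>\<^sub>\<approx>x\<in>- {0}. x \<notin> {1 / q}" by (rule eventually_not_in_cosparse) simp
    have e2: "\<forall>\<^sub>\<approx>x\<in>- {0}. x \<notin> {(-1) / q}" by (rule eventually_not_in_cosparse) simp
    have e3: "\<forall>\<^sub>\<approx>x\<in>- {0}. x \<notin> {\<alpha> / q}" by (rule eventually_not_in_cosparse) simp
    have e4: "\<forall>\<^sub>\<approx>x\<in>- {0}. Wf x \<noteq> 0" using gW by (simp add: good_def)
    have e5: "\<forall>\<^sub>\<approx>x\<in>- {0}. theta q (-1) x \<noteq> 0" using gm by (simp add: good_def)
    have e6: "\<forall>\<^sub>\<approx>x\<in>- {0}. theta q \<alpha> x \<noteq> 0" using ga by (simp add: good_def)
    from e0 e1 e2 e3 e4 e5 e6 hfact show "\<forall>\<^sub>\<approx>x\<in>- {0}. y (q * x) = m x * y x"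
    proof eventually_elim
      case (elim x)
      thus ?case by (intro fe_point) auto
    qed
    fix x :: complex assume "x \<noteq> 0"
    thus "zorder y x = special_order q \<alpha> v x + generic_order m q \<rho> \<rho>' x" by (rule zo)
  qed
qed


end
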